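(* Assume $h_0x+h_1y>0$ for all $(x,y)\in D$. Let $(x^*,y^* )\in\partial D$ be a minimizer of $\psi$ over $D$ lying on the boundary; such a minimizer exists. Let $A,B\subset[0,1]$ be Borel sets with Lebesgue measures $$|A|=\frac{\mu_+-x^*}{\mu_+-\mu_-},\qquad |B|=\frac{\sigma_+-y^*}{\sigma_+-\sigma_-}.$$ Define $(\mu^*,\sigma^* ):[0,1]\to D$ by - $(\mu^*,\sigma^* )=(\mu_-,\ \sigma_-\chi_B+\sigma_+\chi_{B^c})$ if $x^*=\mu_-$; - $(\mu^*,\sigma^* )=(\mu_+,\ \sigma_-\chi_B+\sigma_+\chi_{B^c})$ if $x^*=\mu_+$; - $(\mu^*,\sigma^* )=(\mu_-\chi_A+\mu_+\chi_{A^c},\ \sigma_-)$ if $y^*=\sigma_-$; - $(\mu^*,\sigma^* )=(\mu_-\chi_A+\mu_+\chi_{A^c},\ \sigma_+)$ if $y^*=\sigma_+$. (At a corner, any applicable case may be used.) Then $(\mu^*,\sigma^* )$ minimizes $$\frac{\Big(\int_0^1\big(h_0\mu(\omega)+h_1\sigma(\omega)\big)d\omega\Big)^2}{\int_0^1\big(\mu^2(\omega)+\sigma^2(\omega)\big)d\omega}$$ over all measurable $(\mu(\cdot),\sigma(\cdot)):[0,1]\to D$.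
   Context: Let $0<\mu_-<\mu_+$ and $0<\sigma_-<\sigma_+$ be real numbers, $D=[\mu_-,\mu_+]\times[\sigma_-,\sigma_+]$, and $h_0,h_1\in\mathbb R$. Write $\mu_M=(\mu_++\mu_-)/2$ and $\sigma_M=(\sigma_++\sigma_-)/2$. For $(x,y)\in D$ let $$\psi(x,y)=\frac{(h_0x+h_1y)^2}{2\mu_Mx+2\sigma_My-\mu_-\mu_+-\sigma_-\sigma_+}.$$ $\chi_A$ denotes the indicator function of $A$, and $A^c=[0,1]\setminus A$. *)

theory Defs
  imports "HOL-Analysis.Analysis"
begin

definition rectD :: "real \<Rightarrow> real \<Rightarrow> real \<Rightarrow> real \<Rightarrow> (real \<times> real) set" where
  "rectD mum mup sgm sgp = {mum..mup} \<times> {sgm..sgp}"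

definition psi :: "real \<Rightarrow> real \<Rightarrow> real \<Rightarrow> real \<Rightarrow> real \<Rightarrow> real \<Rightarrow> real \<Rightarrow> real \<Rightarrow> real" where
  "psi mum mup sgm sgp h0 h1 x y =
     (h0 * x + h1 * y)^2 /
     (2 * ((mup + mum) / 2) * x + 2 * ((sgp + sgm) / 2) * y - mum * mup - sgm * sgp)"

definition ratioF :: "real \<Rightarrow> real \<Rightarrow> (real \<Rightarrow> real) \<Rightarrow> (real \<Rightarrow> real) \<Rightarrow> real" where
  "ratioF h0 h1 mu sg =
     (LINT w:{0..1}|lebesgue. h0 * mu w + h1 * sg w)^2 /
     (LINT w:{0..1}|lebesgue. (mu w)^2 + (sg w)^2)"

definition admissible :: "real \<Rightarrow> real \<Rightarrow> real \<Rightarrow> real \<Rightarrow> (real \<Rightarrow> real) \<Rightarrow> (real \<Rightarrow> real) \<Rightarrow> bool" where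
  "admissible mum mup sgm sgp mu sg \<longleftrightarrow>
     set_borel_measurable lebesgue {0..1} mu \<and> set_borel_measurable lebesgue {0..1} sg \<and>
     (\<forall>w\<in>{0..1}. (mu w, sg w) \<in> rectD mum mup sgm sgp)"

end

theory Submission imports Defs begin

lemma S_sets: "{0..1::real} \<in> sets lebesgue" by simp
lemma S_meas: "measure lebesgue {0..1::real} = 1" by simp
lemma S_emeas: "emeasure lebesgue {0..1::real} \<noteq> \<infinity>" by simp

lemma sbm_pow:
  fixes f :: "'a \<Rightarrow> real"
  assumes "set_borel_measurable M S f"
  shows "set_borel_measurable M S (\<lambda>x. f x ^ 2)"
proof -
  have eq: "(\<lambda>x. indicator S x *\<^sub>R f x ^ 2) = (\<lambda>x. (indicator S x *\<^sub>R f x)^2)"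
    by (auto simp: indicator_def fun_eq_iff)
  show ?thesis using assms unfolding set_borel_measurable_def eq by measurable
qed

lemma sint_bound:
  fixes f :: "real \<Rightarrow> real"
  assumes "set_borel_measurable lebesgue {0..1::real} f" "\<forall>w\<in>{0..1}. \<bar>f w\<bar> \<le> C"
  shows "set_integrable lebesgue {0..1} f"
  unfolding set_integrable_def
proof (rule integrableI_bounded_set[where A="{0..1}" and B=C])
  show "(\<lambda>x. indicator {0..1} x *\<^sub>R f x) \<in> borel_measurable lebesgue"
    using assms(1) unfolding set_borel_measurable_def .
qed (use assms(2) in \<open>auto simp: indicator_def\<close>)

lemma sint_const: "set_integrable lebesgue {0..1::real} (\<lambda>_. c::real)"
  by (rule sint_bound[where C="\<bar>c\<bar>"]) (auto simp: set_borel_measurable_def intro!: borel_measurable_times borel_measurable_indicator)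

lemma int_const: "(LINT w:{0..1::real}|lebesgue. c) = (c::real)"
  by (subst set_integral_const) auto

lemma adm_facts:
  fixes mu sg :: "real \<Rightarrow> real"
  assumes adm: "admissible mum mup sgm sgp mu sg"
    and p: "0 < mum" "mum \<le> mup" "0 < sgm" "sgm \<le> sgp"
  defines "X \<equiv> LINT w:{0..1}|lebesgue. mu w"
    and "Y \<equiv> LINT w:{0..1}|lebesgue. sg w"
  shows "mum \<le> X" "X \<le> mup" "sgm \<le> Y" "Y \<le> sgp"
    "(LINT w:{0..1}|lebesgue. h0 * mu w + h1 * sg w) = h0 * X + h1 * Y"
    "(LINT w:{0..1}|lebesgue. (mu w)^2 + (sg w)^2) \<le> (mup+mum) * X + (sgp+sgm) * Y - (mum * mup + sgm * sgp)"
    "(LINT w:{0..1}|lebesgue. (mu w)^2 + (sg w)^2) \<ge> mum^2 + sgm^2"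
    "(\<forall>w\<in>{0..1}. mu w \<in> {mum,mup} \<and> sg w \<in> {sgm,sgp}) \<Longrightarrow>
      (LINT w:{0..1}|lebesgue. (mu w)^2 + (sg w)^2) = (mup+mum) * X + (sgp+sgm) * Y - (mum * mup + sgm * sgp)"
proof -
  have mmu: "set_borel_measurable lebesgue {0..1} mu" and msg: "set_borel_measurable lebesgue {0..1} sg"
    and rng: "\<And>w. w \<in> {0..1} \<Longrightarrow> mum \<le> mu w \<and> mu w \<le> mup \<and> sgm \<le> sg w \<and> sg w \<le> sgp"
    using adm unfolding admissible_def rectD_def by auto
  have imu: "set_integrable lebesgue {0..1} mu"
    by (rule sint_bound[OF mmu, where C=mup]) (use rng p in force)
  have isg: "set_integrable lebesgue {0..1} sg"
    by (rule sint_bound[OF msg, where C=sgp]) (use rng p in force)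
  have imu2: "set_integrable lebesgue {0..1} (\<lambda>w. mu w ^ 2)"
  proof (rule sint_bound[OF sbm_pow[OF mmu], where C="mup^2"], intro ballI)
    fix w :: real assume "w \<in> {0..1}"
    then show "\<bar>mu w ^ 2\<bar> \<le> mup^2" using rng[of w] p by (simp add: power_mono)
  qed
  have isg2: "set_integrable lebesgue {0..1} (\<lambda>w. sg w ^ 2)"
  proof (rule sint_bound[OF sbm_pow[OF msg], where C="sgp^2"], intro ballI)
    fix w :: real assume "w \<in> {0..1}"
    then show "\<bar>sg w ^ 2\<bar> \<le> sgp^2" using rng[of w] p by (simp add: power_mono)
  qed
  have "mum \<le> X" unfolding X_def
    using set_integral_mono[OF sint_const imu, of mum] rng int_const[of mum] by auto
  moreover have "X \<le> mup" unfolding X_def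
    using set_integral_mono[OF imu sint_const, of mup] rng int_const[of mup] by auto
  moreover have "sgm \<le> Y" unfolding Y_def
    using set_integral_mono[OF sint_const isg, of sgm] rng int_const[of sgm] by auto
  moreover have "Y \<le> sgp" unfolding Y_def
    using set_integral_mono[OF isg sint_const, of sgp] rng int_const[of sgp] by auto
  ultimately show "mum \<le> X" "X \<le> mup" "sgm \<le> Y" "Y \<le> sgp" by auto
  show "(LINT w:{0..1}|lebesgue. h0 * mu w + h1 * sg w) = h0 * X + h1 * Y"
    unfolding X_def Y_def
    by (subst set_integral_add(2)) (auto intro: imu isg)
  define g where "g w = (mup+mum) * mu w + (sgp+sgm) * sg w - (mum * mup + sgm * sgp)" for w
  have ig: "set_integrable lebesgue {0..1} g" unfolding g_def
    by (intro set_integral_diff(1) set_integral_add(1) set_integrable_mult_right imu isg sint_const)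
  have Ig: "(LINT w:{0..1}|lebesgue. g w) = (mup+mum) * X + (sgp+sgm) * Y - (mum * mup + sgm * sgp)"
    unfolding g_def X_def Y_def
    by (subst set_integral_diff(2), (intro set_integral_add(1) set_integrable_mult_right imu isg sint_const)+,
        subst set_integral_add(2), (intro set_integrable_mult_right imu isg)+) (simp add: int_const)
  have isq: "set_integrable lebesgue {0..1} (\<lambda>w. (mu w)^2 + (sg w)^2)"
    by (intro set_integral_add(1) imu2 isg2)
  have pw: "(mu w)^2 + (sg w)^2 \<le> g w" if "w \<in> {0..1}" for w
  proof -
    have "(mu w - mum) * (mu w - mup) \<le> 0" using rng[OF that] by (simp add: mult_nonneg_nonpos)
    moreover have "(sg w - sgm) * (sg w - sgp) \<le> 0" using rng[OF that] by (simp add: mult_nonneg_nonpos)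
    ultimately show ?thesis unfolding g_def by (simp add: algebra_simps power2_eq_square)
  qed
  show "(LINT w:{0..1}|lebesgue. (mu w)^2 + (sg w)^2) \<le> (mup+mum) * X + (sgp+sgm) * Y - (mum * mup + sgm * sgp)"
    using set_integral_mono[OF isq ig pw] Ig by simp
  have pw2: "mum^2 + sgm^2 \<le> (mu w)^2 + (sg w)^2" if "w \<in> {0..1}" for w
    using rng[OF that] p by (intro add_mono power_mono) auto
  show "(LINT w:{0..1}|lebesgue. (mu w)^2 + (sg w)^2) \<ge> mum^2 + sgm^2"
    using set_integral_mono[OF sint_const isq pw2] int_const[of "mum^2 + sgm^2"] by simp
  assume ex: "\<forall>w\<in>{0..1}. mu w \<in> {mum,mup} \<and> sg w \<in> {sgm,sgp}"
  have "(LINT w:{0..1}|lebesgue. (mu w)^2 + (sg w)^2) = (LINT w:{0..1}|lebesgue. g w)"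
  proof (rule set_lebesgue_integral_cong, simp, intro allI impI)
    fix w :: real assume "w \<in> {0..1}"
    then have "(mu w - mum) * (mu w - mup) = 0" "(sg w - sgm) * (sg w - sgp) = 0" using ex by auto
    then show "(mu w)^2 + (sg w)^2 = g w" unfolding g_def by (simp add: algebra_simps power2_eq_square)
  qed
  then show "(LINT w:{0..1}|lebesgue. (mu w)^2 + (sg w)^2) = (mup+mum) * X + (sgp+sgm) * Y - (mum * mup + sgm * sgp)"
    using Ig by simp
qed

lemma psi_eq: "psi mum mup sgm sgp h0 h1 x y =
   (h0 * x + h1 * y)^2 / ((mup + mum) * x + (sgp + sgm) * y - (mum * mup + sgm * sgp))"
proof -
  have a: "2 * ((mup + mum) / 2) = mup + mum" "2 * ((sgp + sgm) / 2) = sgp + sgm" by simp_all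
  show ?thesis unfolding psi_def a by (simp add: algebra_simps)
qed

lemma two_val:
  fixes f :: "real \<Rightarrow> real"
  assumes f: "\<forall>w\<in>{0..1}. f w = (if w \<in> A then a else b)" and A: "A \<in> sets borel" "A \<subseteq> {0..1}"
  shows "set_borel_measurable lebesgue {0..1} f"
    "(LINT w:{0..1}|lebesgue. f w) = b - (b - a) * measure lborel A"
proof -
  have Al: "A \<in> sets lebesgue" using A by simp
  have eq: "(\<lambda>w. indicator {0..1} w *\<^sub>R f w) = (\<lambda>w. indicator {0..1} w * (b - (b - a) * indicator A w))"
    using f A(2) by (auto simp: fun_eq_iff indicator_def)
  show "set_borel_measurable lebesgue {0..1} f"
    unfolding set_borel_measurable_def eq using Al
    by (intro borel_measurable_times borel_measurable_diff borel_measurable_indicator borel_measurable_const) auto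
  have "(LINT w:{0..1}|lebesgue. f w) = (LINT w:{0..1}|lebesgue. b - (b - a) * indicator A w)"
    using f by (intro set_lebesgue_integral_cong) (auto simp: indicator_def)
  also have "\<dots> = b - (b - a) * (LINT w:{0..1}|lebesgue. indicator A w)"
  proof -
    have iA: "set_integrable lebesgue {0..1} (indicator A :: real \<Rightarrow> real)"
      apply (rule sint_bound[where C=1])
      using Al by (auto simp: set_borel_measurable_def intro!: borel_measurable_times borel_measurable_indicator split: split_indicator)
    show ?thesis
      by (subst set_integral_diff(2)) (use iA sint_const in \<open>auto simp: int_const\<close>)
  qed
  also have "(LINT w:{0..1}|lebesgue. indicator A w) = measure lebesgue A"
  proof -
    have "(\<lambda>w. indicator {0..1} w *\<^sub>R indicator A w) = (indicator A :: real \<Rightarrow> real)"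
      using A(2) by (auto simp: fun_eq_iff indicator_def)
    moreover have "emeasure lebesgue A < \<infinity>"
    proof -
      have "emeasure lebesgue A \<le> emeasure lebesgue {0..1::real}"
        using A Al by (intro emeasure_mono) auto
      then show ?thesis using ennreal_one_less_top by (simp add: le_less_trans)
    qed
    ultimately show ?thesis unfolding set_lebesgue_integral_def using Al by simp
  qed
  also have "measure lebesgue A = measure lborel A" using A by simp
  finally show "(LINT w:{0..1}|lebesgue. f w) = b - (b - a) * measure lborel A" .
qed

lemma ray_frontier:
  fixes p d :: "real \<times> real"
  assumes "p \<in> D" "bounded D" "d \<noteq> 0"
  shows "\<exists>t\<ge>0. p + t *\<^sub>R d \<in> frontier D"
proof -
  let ?S = "(\<lambda>t. p + t *\<^sub>R d) ` {0..}"
  have c: "connected ?S"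
    by (intro connected_continuous_image continuous_intros) (simp add: is_interval_connected is_interval_ci)
  have i: "?S \<inter> D \<noteq> {}" using assms(1) by (auto intro!: image_eqI[where x=0])
  obtain r where r: "\<forall>x\<in>D. norm x \<le> r" using assms(2) by (auto simp: bounded_iff)
  define t where "t = (\<bar>r\<bar> + norm p + 1) / norm d"
  have nd: "norm d > 0" using assms(3) by simp
  have t0: "t \<ge> 0" unfolding t_def using nd by simp
  have "norm (t *\<^sub>R d) = \<bar>r\<bar> + norm p + 1" unfolding t_def using nd by simp
  moreover have "norm (t *\<^sub>R d) \<le> norm (p + t *\<^sub>R d) + norm p"
    using norm_triangle_ineq4[of "p + t *\<^sub>R d" p] by simp
  ultimately have "norm (p + t *\<^sub>R d) > r" by linarith
  then have "p + t *\<^sub>R d \<notin> D" using r by force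
  then have "?S - D \<noteq> {}" using t0 by auto
  from connected_Int_frontier[OF c i this] show ?thesis by auto
qed

theorem mainTheorem7:
  fixes mum mup sgm sgp h0 h1 :: real
  assumes "0 < mum" "mum < mup" "0 < sgm" "sgm < sgp"
    and pos: "\<forall>(x, y) \<in> rectD mum mup sgm sgp. h0 * x + h1 * y > 0"
  shows "(\<exists>p \<in> frontier (rectD mum mup sgm sgp).
            \<forall>q \<in> rectD mum mup sgm sgp.
              psi mum mup sgm sgp h0 h1 (fst p) (snd p) \<le> psi mum mup sgm sgp h0 h1 (fst q) (snd q))
    \<and> (\<forall>xs ys A B (mus :: real \<Rightarrow> real) (sgs :: real \<Rightarrow> real).
        (xs, ys) \<in> frontier (rectD mum mup sgm sgp) \<longrightarrow>
        (\<forall>q \<in> rectD mum mup sgm sgp.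
           psi mum mup sgm sgp h0 h1 xs ys \<le> psi mum mup sgm sgp h0 h1 (fst q) (snd q)) \<longrightarrow>
        A \<in> sets borel \<longrightarrow> A \<subseteq> {0..1} \<longrightarrow>
        B \<in> sets borel \<longrightarrow> B \<subseteq> {0..1} \<longrightarrow>
        measure lborel A = (mup - xs) / (mup - mum) \<longrightarrow>
        measure lborel B = (sgp - ys) / (sgp - sgm) \<longrightarrow>
        ((xs = mum \<and> (\<forall>w\<in>{0..1}. mus w = mum \<and> sgs w = (if w \<in> B then sgm else sgp))) \<or>
         (xs = mup \<and> (\<forall>w\<in>{0..1}. mus w = mup \<and> sgs w = (if w \<in> B then sgm else sgp))) \<or>
         (ys = sgm \<and> (\<forall>w\<in>{0..1}. mus w = (if w \<in> A then mum else mup) \<and> sgs w = sgm)) \<or>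
         (ys = sgp \<and> (\<forall>w\<in>{0..1}. mus w = (if w \<in> A then mum else mup) \<and> sgs w = sgp))) \<longrightarrow>
        admissible mum mup sgm sgp mus sgs \<and>
        (\<forall>mu sg. admissible mum mup sgm sgp mu sg \<longrightarrow> ratioF h0 h1 mus sgs \<le> ratioF h0 h1 mu sg))"
proof -
  note p = assms(1-4)
  define D where "D = rectD mum mup sgm sgp"
  define Lf where "Lf x y = (mup + mum) * x + (sgp + sgm) * y - (mum * mup + sgm * sgp)" for x y
  have psiL: "psi mum mup sgm sgp h0 h1 x y = (h0 * x + h1 * y)^2 / Lf x y" for x y
    unfolding Lf_def psi_eq ..
  have clD: "closed D" unfolding D_def rectD_def by (intro closed_Times closed_atLeastAtMost)
  have cpD: "compact D" unfolding D_def rectD_def by (intro compact_Times compact_Icc)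
  have Dfr: "frontier D \<subseteq> D" using clD by (rule frontier_subset_closed)
  have Lpos: "Lf x y > 0" if "(x, y) \<in> D" for x y
  proof -
    have r: "mum \<le> x" "x \<le> mup" "sgm \<le> y" "y \<le> sgp" using that unfolding D_def rectD_def by auto
    have "(x - mum) * (x - mup) \<le> 0" using r by (simp add: mult_nonneg_nonpos)
    moreover have "(y - sgm) * (y - sgp) \<le> 0" using r by (simp add: mult_nonneg_nonpos)
    moreover have "x * x > 0" using r p by simp
    moreover have "y * y \<ge> 0" by simp
    moreover have "Lf x y = (x * x + y * y) - (x - mum) * (x - mup) - (y - sgm) * (y - sgp)"
      unfolding Lf_def by (simp add: algebra_simps)
    ultimately show ?thesis by linarith
  qed
  have cornerD: "(mum, sgm) \<in> D" unfolding D_def rectD_def using p by auto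
  have hnz: "h0 \<noteq> 0 \<or> h1 \<noteq> 0"
  proof (rule ccontr)
    assume "\<not> ?thesis"
    then show False using pos cornerD unfolding D_def by auto
  qed
  have part1: "\<exists>p \<in> frontier D. \<forall>q \<in> D.
      psi mum mup sgm sgp h0 h1 (fst p) (snd p) \<le> psi mum mup sgm sgp h0 h1 (fst q) (snd q)"
  proof -
    let ?f = "\<lambda>p. psi mum mup sgm sgp h0 h1 (fst p) (snd p)"
    have "(mum, sgm) \<notin> interior D" unfolding D_def rectD_def interior_Times by simp
    then have ne: "frontier D \<noteq> {}" using cornerD clD by (auto simp: frontier_def closure_closed)
    have cont: "continuous_on (frontier D) ?f"
      unfolding psiL
    proof (intro continuous_intros ballI)
      fix z assume "z \<in> frontier D"
      then have "z \<in> D" using Dfr by auto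
      then show "Lf (fst z) (snd z) \<noteq> 0" using Lpos[of "fst z" "snd z"] by simp
    qed (auto simp: Lf_def intro!: continuous_intros)
    obtain p0 where p0: "p0 \<in> frontier D" "\<forall>z\<in>frontier D. ?f p0 \<le> ?f z"
      using continuous_attains_inf[OF compact_frontier[OF cpD] ne cont] by blast
    have "?f p0 \<le> ?f q" if q: "q \<in> D" for q
    proof -
      obtain x y where qxy: "q = (x, y)" by (cases q)
      define k where "k = (mup + mum) * h1 - (sgp + sgm) * h0"
      define s :: real where "s = (if k \<ge> 0 then 1 else -1)"
      define d where "d = (s * h1, - (s * h0))"
      have sk: "s * k \<ge> 0" unfolding s_def by auto
      have "d \<noteq> 0" using hnz unfolding d_def s_def by (auto simp: zero_prod_def)
      then obtain t where t: "t \<ge> 0" "q + t *\<^sub>R d \<in> frontier D"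
        using ray_frontier[OF q compact_imp_bounded[OF cpD]] by blast
      define x' y' where "x' = x + t * s * h1" and "y' = y - t * s * h0"
      have r: "q + t *\<^sub>R d = (x', y')" unfolding qxy d_def x'_def y'_def by simp
      have N: "h0 * x' + h1 * y' = h0 * x + h1 * y" unfolding x'_def y'_def by (simp add: algebra_simps)
      have L: "Lf x' y' = Lf x y + t * (s * k)" unfolding Lf_def x'_def y'_def k_def by (simp add: algebra_simps)
      have Lq: "Lf x y > 0" using Lpos q qxy by simp
      have "Lf x y \<le> Lf x' y'" using L t sk by simp
      then have "?f (x', y') \<le> ?f q"
        unfolding qxy psiL fst_conv snd_conv N using Lq
        by (intro divide_left_mono) auto
      moreover have "?f p0 \<le> ?f (x', y')" using p0 t r by metis
      ultimately show ?thesis by linarith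
    qed
    then show ?thesis using p0 by blast
  qed
  have part2: "admissible mum mup sgm sgp mus sgs \<and>
        (\<forall>mu sg. admissible mum mup sgm sgp mu sg \<longrightarrow> ratioF h0 h1 mus sgs \<le> ratioF h0 h1 mu sg)"
    if fr: "(xs, ys) \<in> frontier D"
      and mn: "\<forall>q \<in> D. psi mum mup sgm sgp h0 h1 xs ys \<le> psi mum mup sgm sgp h0 h1 (fst q) (snd q)"
      and A: "A \<in> sets borel" "A \<subseteq> {0..1}" and B: "B \<in> sets borel" "B \<subseteq> {0..1}"
      and mA: "measure lborel A = (mup - xs) / (mup - mum)"
      and mB: "measure lborel B = (sgp - ys) / (sgp - sgm)"
      and cs: "(xs = mum \<and> (\<forall>w\<in>{0..1}. mus w = mum \<and> sgs w = (if w \<in> B then sgm else sgp))) \<or>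
         (xs = mup \<and> (\<forall>w\<in>{0..1}. mus w = mup \<and> sgs w = (if w \<in> B then sgm else sgp))) \<or>
         (ys = sgm \<and> (\<forall>w\<in>{0..1}. mus w = (if w \<in> A then mum else mup) \<and> sgs w = sgm)) \<or>
         (ys = sgp \<and> (\<forall>w\<in>{0..1}. mus w = (if w \<in> A then mum else mup) \<and> sgs w = sgp))"
    for xs ys A B mus sgs
  proof -
    have xyD: "(xs, ys) \<in> D" using fr Dfr by auto
    have eA: "mup - (mup - mum) * measure lborel A = xs" using mA p by (simp add: field_simps)
    have eB: "sgp - (sgp - sgm) * measure lborel B = ys" using mB p by (simp add: field_simps)
    have "\<exists>A1 a b. (\<forall>w\<in>{0..1}. mus w = (if w \<in> A1 then a else b)) \<and> A1 \<in> sets borel \<and> A1 \<subseteq> {0..1}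
       \<and> a \<in> {mum, mup} \<and> b \<in> {mum, mup} \<and> b - (b - a) * measure lborel A1 = xs"
      using cs
    proof (elim disjE conjE)
      assume "xs = mum" "\<forall>w\<in>{0..1}. mus w = mum \<and> sgs w = (if w \<in> B then sgm else sgp)"
      then show ?thesis by (intro exI[of _ "{}"] exI[of _ mum]) auto
    next
      assume "xs = mup" "\<forall>w\<in>{0..1}. mus w = mup \<and> sgs w = (if w \<in> B then sgm else sgp)"
      then show ?thesis by (intro exI[of _ "{}"] exI[of _ mup]) auto
    next
      assume "ys = sgm" "\<forall>w\<in>{0..1}. mus w = (if w \<in> A then mum else mup) \<and> sgs w = sgm"
      then show ?thesis using A eA by (intro exI[of _ A] exI[of _ mum] exI[of _ mup]) auto
    next
      assume "ys = sgp" "\<forall>w\<in>{0..1}. mus w = (if w \<in> A then mum else mup) \<and> sgs w = sgp"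
      then show ?thesis using A eA by (intro exI[of _ A] exI[of _ mum] exI[of _ mup]) auto
    qed
    then obtain A1 a1 b1 where a1: "\<forall>w\<in>{0..1}. mus w = (if w \<in> A1 then a1 else b1)" "A1 \<in> sets borel" "A1 \<subseteq> {0..1}"
       "a1 \<in> {mum, mup}" "b1 \<in> {mum, mup}" "b1 - (b1 - a1) * measure lborel A1 = xs" by blast
    have "\<exists>B1 a b. (\<forall>w\<in>{0..1}. sgs w = (if w \<in> B1 then a else b)) \<and> B1 \<in> sets borel \<and> B1 \<subseteq> {0..1}
       \<and> a \<in> {sgm, sgp} \<and> b \<in> {sgm, sgp} \<and> b - (b - a) * measure lborel B1 = ys"
      using cs
    proof (elim disjE conjE)
      assume "ys = sgm" "\<forall>w\<in>{0..1}. mus w = (if w \<in> A then mum else mup) \<and> sgs w = sgm"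
      then show ?thesis by (intro exI[of _ "{}"] exI[of _ sgm]) auto
    next
      assume "ys = sgp" "\<forall>w\<in>{0..1}. mus w = (if w \<in> A then mum else mup) \<and> sgs w = sgp"
      then show ?thesis by (intro exI[of _ "{}"] exI[of _ sgp]) auto
    next
      assume "xs = mum" "\<forall>w\<in>{0..1}. mus w = mum \<and> sgs w = (if w \<in> B then sgm else sgp)"
      then show ?thesis using B eB by (intro exI[of _ B] exI[of _ sgm] exI[of _ sgp]) auto
    next
      assume "xs = mup" "\<forall>w\<in>{0..1}. mus w = mup \<and> sgs w = (if w \<in> B then sgm else sgp)"
      then show ?thesis using B eB by (intro exI[of _ B] exI[of _ sgm] exI[of _ sgp]) auto
    qed
    then obtain B1 a2 b2 where a2: "\<forall>w\<in>{0..1}. sgs w = (if w \<in> B1 then a2 else b2)" "B1 \<in> sets borel" "B1 \<subseteq> {0..1}"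
       "a2 \<in> {sgm, sgp}" "b2 \<in> {sgm, sgp}" "b2 - (b2 - a2) * measure lborel B1 = ys" by blast
    have tv: "\<forall>w\<in>{0..1}. mus w \<in> {mum, mup} \<and> sgs w \<in> {sgm, sgp}"
      using a1(1,4,5) a2(1,4,5) by auto
    have adm: "admissible mum mup sgm sgp mus sgs"
      unfolding admissible_def rectD_def
      using two_val(1)[OF a1(1-3)] two_val(1)[OF a2(1-3)] tv p by auto
    have X: "(LINT w:{0..1}|lebesgue. mus w) = xs" using two_val(2)[OF a1(1-3)] a1(6) by simp
    have Y: "(LINT w:{0..1}|lebesgue. sgs w) = ys" using two_val(2)[OF a2(1-3)] a2(6) by simp
    note F = adm_facts[OF adm p(1) less_imp_le[OF p(2)] p(3) less_imp_le[OF p(4)], unfolded X Y]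
    have r0: "ratioF h0 h1 mus sgs = psi mum mup sgm sgp h0 h1 xs ys"
      unfolding ratioF_def psiL F(5) F(8)[OF tv] Lf_def ..
    have "ratioF h0 h1 mus sgs \<le> ratioF h0 h1 mu sg" if adm2: "admissible mum mup sgm sgp mu sg" for mu sg
    proof -
      define X where "X = (LINT w:{0..1}|lebesgue. mu w)"
      define Y where "Y = (LINT w:{0..1}|lebesgue. sg w)"
      define J where "J = (LINT w:{0..1}|lebesgue. (mu w)^2 + (sg w)^2)"
      note G = adm_facts[OF adm2 p(1) less_imp_le[OF p(2)] p(3) less_imp_le[OF p(4)], folded X_def Y_def J_def]
      have XY: "(X, Y) \<in> D" unfolding D_def rectD_def using G(1-4) by auto
      have J0: "J > 0" using G(7) p by (smt (verit) zero_less_power power2_less_0)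
      have JL: "J \<le> Lf X Y" using G(6) unfolding Lf_def .
      have "psi mum mup sgm sgp h0 h1 X Y \<le> ratioF h0 h1 mu sg"
        unfolding ratioF_def psiL G(5) J_def[symmetric]
        using J0 JL by (intro divide_left_mono) auto
      moreover have "psi mum mup sgm sgp h0 h1 xs ys \<le> psi mum mup sgm sgp h0 h1 X Y"
        using mn XY by force
      ultimately show ?thesis using r0 by linarith
    qed
    with adm show ?thesis by blast
  qed
  show ?thesis using part1 part2 unfolding D_def by blast
qed

end
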